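(* Let $A$ be a compatible real alternative $^*$-algebra. Then: (1) the norm function $n$ takes values in the nucleus of $A$; (2) for all $x,y\in A$, $(x,x^c,y)=0$. As a consequence, the $^*$-subalgebra generated by any two elements $x,y\in A$ is associative.
   Context: A real alternative $^*$-algebra is a real vector space $A$ with a bilinear product and a unit $1$ (with $\mathbb{R}$ identified with $\mathbb{R}1$) such that the associator $(x,y,z)=(xy)z-x(yz)$ is an alternating function, equipped with a $^*$-involution $x\mapsto x^c$, i.e. a real linear map with $(x^c)^c=x$, $(xy)^c=y^cx^c$ and $r^c=r$ for $r\in\mathbb{R}$. The trace is $t(x)=x+x^c$ and the norm is $n(x)=xx^c$. The nucleus of $A$ is $\{r\in A:(r,x,y)=0\ \forall x,y\in A\}$. $A$ is called compatible if $t$ takes values in the nucleus of $A$. *)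

theory Defs
  imports "HOL-Analysis.Linear_Algebra"
begin

text \<open>A real alternative star-algebra: a real vector space 'a with a bilinear
product mul, a unit e (with e \<noteq> 0, so that the reals embed as r \<mapsto> r e),
an alternating associator, and a star-involution cj.\<close>

definition associator :: "('a \<Rightarrow> 'a \<Rightarrow> 'a) \<Rightarrow> 'a \<Rightarrow> 'a \<Rightarrow> 'a \<Rightarrow> 'a::real_vector" where
  "associator mul x y z = mul (mul x y) z - mul x (mul y z)"

definition alt_star_algebra ::
  "('a::real_vector \<Rightarrow> 'a \<Rightarrow> 'a) \<Rightarrow> 'a \<Rightarrow> ('a \<Rightarrow> 'a) \<Rightarrow> bool" where
  "alt_star_algebra mul e cj \<longleftrightarrow>
     bilinear mul \<and> e \<noteq> 0 \<and>
     (\<forall>x. mul e x = x \<and> mul x e = x) \<and>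
     (\<forall>x y. associator mul x x y = 0 \<and> associator mul x y x = 0 \<and> associator mul y x x = 0) \<and>
     linear cj \<and>
     (\<forall>x. cj (cj x) = x) \<and>
     (\<forall>x y. cj (mul x y) = mul (cj y) (cj x)) \<and>
     (\<forall>r::real. cj (r *\<^sub>R e) = r *\<^sub>R e)"

definition trace_of :: "('a \<Rightarrow> 'a) \<Rightarrow> 'a \<Rightarrow> 'a::real_vector" where
  "trace_of cj x = x + cj x"

definition norm_of :: "('a \<Rightarrow> 'a \<Rightarrow> 'a) \<Rightarrow> ('a \<Rightarrow> 'a) \<Rightarrow> 'a \<Rightarrow> 'a::real_vector" where
  "norm_of mul cj x = mul x (cj x)"

definition nucleus :: "('a \<Rightarrow> 'a \<Rightarrow> 'a) \<Rightarrow> 'a::real_vector set" where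
  "nucleus mul = {r. \<forall>x y. associator mul r x y = 0}"

definition compatible :: "('a::real_vector \<Rightarrow> 'a \<Rightarrow> 'a) \<Rightarrow> ('a \<Rightarrow> 'a) \<Rightarrow> bool" where
  "compatible mul cj \<longleftrightarrow> (\<forall>x. trace_of cj x \<in> nucleus mul)"

inductive_set star_subalg_gen ::
  "('a::real_vector \<Rightarrow> 'a \<Rightarrow> 'a) \<Rightarrow> 'a \<Rightarrow> ('a \<Rightarrow> 'a) \<Rightarrow> 'a set \<Rightarrow> 'a set"
  for mul e cj S where
  gen: "x \<in> S \<Longrightarrow> x \<in> star_subalg_gen mul e cj S"
| unit: "e \<in> star_subalg_gen mul e cj S"
| add: "x \<in> star_subalg_gen mul e cj S \<Longrightarrow> y \<in> star_subalg_gen mul e cj S \<Longrightarrow> x + y \<in> star_subalg_gen mul e cj S"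
| scale: "x \<in> star_subalg_gen mul e cj S \<Longrightarrow> (r::real) *\<^sub>R x \<in> star_subalg_gen mul e cj S"
| mult: "x \<in> star_subalg_gen mul e cj S \<Longrightarrow> y \<in> star_subalg_gen mul e cj S \<Longrightarrow> mul x y \<in> star_subalg_gen mul e cj S"
| conj: "x \<in> star_subalg_gen mul e cj S \<Longrightarrow> cj x \<in> star_subalg_gen mul e cj S"

end

theory Submission imports Defs begin

inductive_set Zs :: "('a::real_vector \<Rightarrow> 'a \<Rightarrow> 'a) \<Rightarrow> ('a \<Rightarrow> 'a) \<Rightarrow> 'a set"
  for mul cj where
  sym: "cj s = s \<Longrightarrow> s \<in> Zs mul cj"
| add: "a \<in> Zs mul cj \<Longrightarrow> b \<in> Zs mul cj \<Longrightarrow> a + b \<in> Zs mul cj"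
| scale: "a \<in> Zs mul cj \<Longrightarrow> (r::real) *\<^sub>R a \<in> Zs mul cj"
| mult: "a \<in> Zs mul cj \<Longrightarrow> b \<in> Zs mul cj \<Longrightarrow> mul a b \<in> Zs mul cj"

locale alt =
  fixes mul :: "'a::real_vector \<Rightarrow> 'a \<Rightarrow> 'a" (infixl "\<odot>" 70) and e :: 'a and cj :: "'a \<Rightarrow> 'a"
  assumes A: "alt_star_algebra mul e cj"
    and C: "compatible mul cj"
begin

abbreviation As where "As \<equiv> associator mul"

lemma bil: "bilinear mul" using A by (simp add: alt_star_algebra_def)
lemma lin: "linear cj" using A by (simp add: alt_star_algebra_def)

lemma m_simps[simp]:
  "(a + b) \<odot> c = a \<odot> c + b \<odot> c" "c \<odot> (a + b) = c \<odot> a + c \<odot> b"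
  "(a - b) \<odot> c = a \<odot> c - b \<odot> c" "c \<odot> (a - b) = c \<odot> a - c \<odot> b"
  "(- a) \<odot> c = - (a \<odot> c)" "c \<odot> (- a) = - (c \<odot> a)"
  "(r *\<^sub>R a) \<odot> c = r *\<^sub>R (a \<odot> c)" "c \<odot> (r *\<^sub>R a) = r *\<^sub>R (c \<odot> a)"
  "0 \<odot> c = 0" "c \<odot> 0 = 0"
  using bil by (simp_all add: bilinear_ladd bilinear_radd bilinear_lsub bilinear_rsub
      bilinear_lneg bilinear_rneg bilinear_lmul bilinear_rmul bilinear_lzero bilinear_rzero)

lemma cj_simps[simp]:
  "cj (a + b) = cj a + cj b" "cj (a - b) = cj a - cj b" "cj (- a) = - cj a"
  "cj (r *\<^sub>R a) = r *\<^sub>R cj a" "cj 0 = 0"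
  using lin by (simp_all add: linear_add linear_diff linear_neg linear_cmul linear_0)

lemma cjcj[simp]: "cj (cj x) = x" using A by (simp add: alt_star_algebra_def)
lemma cjm: "cj (a \<odot> b) = cj b \<odot> cj a" using A by (simp add: alt_star_algebra_def)
lemma unitl[simp]: "e \<odot> x = x" using A by (simp add: alt_star_algebra_def)
lemma unitr[simp]: "x \<odot> e = x" using A by (simp add: alt_star_algebra_def)
lemma cje[simp]: "cj e = e"
proof -
  have "cj (1 *\<^sub>R e) = 1 *\<^sub>R e" using A by (simp only: alt_star_algebra_def)
  thus ?thesis by simp
qed

lemma alt1[simp]: "As x x y = 0" using A by (simp add: alt_star_algebra_def)
lemma alt2[simp]: "As x y x = 0" using A by (simp add: alt_star_algebra_def)
lemma alt3[simp]: "As y x x = 0" using A by (simp add: alt_star_algebra_def)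

lemma As_def': "As x y z = (x \<odot> y) \<odot> z - x \<odot> (y \<odot> z)" by (simp add: associator_def)

lemma As_lin:
  "As (a + b) y z = As a y z + As b y z" "As x (a + b) z = As x a z + As x b z"
  "As x y (a + b) = As x y a + As x y b"
  "As (r *\<^sub>R a) y z = r *\<^sub>R As a y z" "As x (r *\<^sub>R a) z = r *\<^sub>R As x a z"
  "As x y (r *\<^sub>R a) = r *\<^sub>R As x y a"
  "As (a - b) y z = As a y z - As b y z" "As x (a - b) z = As x a z - As x b z"
  "As x y (a - b) = As x y a - As x y b"
  "As (- a) y z = - As a y z" "As x (- a) z = - As x a z" "As x y (- a) = - As x y a"
  by (simp_all add: As_def' algebra_simps)

lemma skew12: "As x y z = - As y x z"
proof -
  have "0 = As (x+y) (x+y) z" by simp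
  also have "\<dots> = As x x z + As x y z + (As y x z + As y y z)" by (simp only: As_lin) (simp add: algebra_simps)
  finally have "As x y z + As y x z = 0" by simp
  thus ?thesis by (simp add: eq_neg_iff_add_eq_0)
qed

lemma skew23: "As x y z = - As x z y"
proof -
  have "0 = As x (y+z) (y+z)" by simp
  also have "\<dots> = As x y y + As x y z + (As x z y + As x z z)" by (simp only: As_lin) (simp add: algebra_simps)
  finally have "As x y z + As x z y = 0" by simp
  thus ?thesis by (simp add: eq_neg_iff_add_eq_0)
qed

lemma cyc: "As x y z = As y z x"
  by (simp add: skew12[of x y z] skew23[of y x z])

abbreviation N where "N \<equiv> nucleus mul"

lemma inN: "n \<in> N \<longleftrightarrow> (\<forall>x y. As n x y = 0)" by (simp add: nucleus_def)

lemma N1: "n \<in> N \<Longrightarrow> As n x y = 0" by (simp add: inN)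
lemma N2: "n \<in> N \<Longrightarrow> As x n y = 0" using cyc[of x n y] N1[of n y x] by simp
lemma N3: "n \<in> N \<Longrightarrow> As x y n = 0" using cyc[of x y n] cyc[of y n x] N1[of n x y] by simp

lemma N_add: "a \<in> N \<Longrightarrow> b \<in> N \<Longrightarrow> a + b \<in> N" by (simp add: inN As_lin)
lemma N_scale: "a \<in> N \<Longrightarrow> r *\<^sub>R a \<in> N" by (simp add: inN As_lin)
lemma e_N: "e \<in> N" by (simp add: inN As_def')
lemma N_mult: assumes "a \<in> N" "b \<in> N" shows "a \<odot> b \<in> N"
proof -
  { fix x y
    have 1: "(a \<odot> b) \<odot> x = a \<odot> (b \<odot> x)" using N1[OF assms(1), of b x] by (simp add: As_def')
    have 2: "((a \<odot> b) \<odot> x) \<odot> y = (a \<odot> (b \<odot> x)) \<odot> y" by (simp add: 1)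
    also have "\<dots> = a \<odot> ((b \<odot> x) \<odot> y)" using N1[OF assms(1), of "b \<odot> x" y] by (simp add: As_def')
    also have "\<dots> = a \<odot> (b \<odot> (x \<odot> y))" using N1[OF assms(2), of x y] by (simp add: As_def')
    also have "\<dots> = (a \<odot> b) \<odot> (x \<odot> y)" using N1[OF assms(1), of b "x \<odot> y"] by (simp add: As_def')
    finally have "As (a \<odot> b) x y = 0" by (simp add: As_def') }
  thus ?thesis by (simp add: inN)
qed

lemma trN: "x + cj x \<in> N" using C by (simp add: compatible_def trace_of_def)

lemma symN: assumes "cj s = s" shows "s \<in> N"
proof -
  have "(1/2::real) *\<^sub>R (s + cj s) \<in> N" by (rule N_scale[OF trN])
  moreover have "(1/2::real) *\<^sub>R (s + cj s) = s" using assms by (simp add: scaleR_2)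
  ultimately show ?thesis by simp
qed

lemma N_pull: "n \<in> N \<Longrightarrow> As (n \<odot> a) b c = n \<odot> As a b c"
proof -
  assume n: "n \<in> N"
  have "(n \<odot> a) \<odot> b = n \<odot> (a \<odot> b)" using N1[OF n, of a b] by (simp add: As_def')
  moreover have "((n \<odot> a) \<odot> b) \<odot> c = n \<odot> ((a \<odot> b) \<odot> c)"
    using N1[OF n, of "a \<odot> b" c] calculation by (simp add: As_def')
  moreover have "(n \<odot> a) \<odot> (b \<odot> c) = n \<odot> (a \<odot> (b \<odot> c))" using N1[OF n, of a "b \<odot> c"] by (simp add: As_def')
  ultimately show ?thesis by (simp add: As_def')
qed

lemma N_pull2: "n \<in> N \<Longrightarrow> As a (n \<odot> b) c = n \<odot> As a b c"
  using N_pull[of n b a c] skew12[of a "n \<odot> b" c] skew12[of b a c] by simp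

lemma ass_N: "n \<in> N \<Longrightarrow> (n \<odot> a) \<odot> b = n \<odot> (a \<odot> b)"
  using N1[of n a b] by (simp add: As_def')
lemma ass_N2: "n \<in> N \<Longrightarrow> (a \<odot> n) \<odot> b = a \<odot> (n \<odot> b)"
  using N2[of n a b] by (simp add: As_def')
lemma ass_N3: "n \<in> N \<Longrightarrow> (a \<odot> b) \<odot> n = a \<odot> (b \<odot> n)"
  using N3[of n a b] by (simp add: As_def')

lemma part1: "norm_of mul cj x \<in> N"
  unfolding norm_of_def by (rule symN) (simp add: cjm)

lemma part2: "As x (cj x) y = 0"
proof -
  have "cj x = (x + cj x) - x" by simp
  hence "As x (cj x) y = As x (x + cj x) y - As x x y" by (metis As_lin(8))
  thus ?thesis using N2[OF trN[of x]] by simp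
qed


abbreviation Z where "Z \<equiv> Zs mul cj"

lemma Z_N: "z \<in> Z \<Longrightarrow> z \<in> N"
  by (induction rule: Zs.induct) (auto intro: symN N_add N_scale N_mult)

lemma Z_cj: "z \<in> Z \<Longrightarrow> cj z \<in> Z"
  by (induction rule: Zs.induct) (auto intro: Zs.intros simp: cjm)

lemma Z_e: "e \<in> Z" by (rule Zs.sym) simp
lemma Z_neg: "a \<in> Z \<Longrightarrow> - a \<in> Z" using Zs.scale[where r="-1" and a=a] by simp
lemma Z_diff: "a \<in> Z \<Longrightarrow> b \<in> Z \<Longrightarrow> a - b \<in> Z"
  using Zs.add[OF _ Z_neg] by (metis diff_conv_add_uminus)
lemma Z_tr: "a + cj a \<in> Z" by (rule Zs.sym) (simp add: add.commute)

lemma Z_comm: "z \<in> Z \<Longrightarrow> z \<odot> a - a \<odot> z \<in> Z"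
proof (induction arbitrary: a rule: Zs.induct)
  case (sym s)
  define c where "c = s \<odot> a - a \<odot> s"
  have cjc: "cj c = cj a \<odot> s - s \<odot> cj a" using sym by (simp add: c_def cjm)
  have 1: "c + cj c \<in> Z" by (rule Z_tr)
  have "c - cj c = s \<odot> (a + cj a) - (a + cj a) \<odot> s" by (simp only: cjc) (simp add: c_def algebra_simps)
  moreover have "s \<in> Z" using sym(1) by (rule Zs.sym)
  ultimately have 2: "c - cj c \<in> Z" using Z_tr[of a] by (metis Z_diff Zs.mult)
  have "c = (1/2) *\<^sub>R (c + cj c) + (1/2) *\<^sub>R (c - cj c)"
    by (simp add: algebra_simps scaleR_add_left[symmetric])
  hence "c \<in> Z" using 1 2 by (metis Zs.add Zs.scale)
  thus ?case by (simp add: c_def)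
next
  case (add x y)
  have "(x + y) \<odot> a - a \<odot> (x + y) = (x \<odot> a - a \<odot> x) + (y \<odot> a - a \<odot> y)" by simp
  thus ?case using add by (metis Zs.add)
next
  case (scale x r)
  have "(r *\<^sub>R x) \<odot> a - a \<odot> (r *\<^sub>R x) = r *\<^sub>R (x \<odot> a - a \<odot> x)" by (simp add: algebra_simps)
  thus ?case using scale by (metis Zs.scale)
next
  case (mult x y)
  have xN: "x \<in> N" and yN: "y \<in> N" using mult Z_N by auto
  have "(x \<odot> y) \<odot> a - a \<odot> (x \<odot> y) = x \<odot> (y \<odot> a - a \<odot> y) + (x \<odot> a - a \<odot> x) \<odot> y"
    using ass_N[OF xN, of y a] ass_N2[OF xN, of a y] ass_N3[OF yN, of a x] ass_N[OF xN, of a y] by simp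
  thus ?case using mult by (metis Zs.add Zs.mult)
qed

lemma assoc_of: "As a b c = 0 \<Longrightarrow> (a \<odot> b) \<odot> c = a \<odot> (b \<odot> c)" by (simp add: As_def')

lemma teich: "As (a \<odot> b) c d - As a (b \<odot> c) d + As a b (c \<odot> d) = a \<odot> As b c d + As a b c \<odot> d"
  by (simp add: As_def' algebra_simps)

end

locale gen2 = alt +
  fixes u v w
  assumes su: "cj u = - u" and sv: "cj v = - v" and w_def: "w = u \<odot> v"
begin

definition inP where "inP p \<longleftrightarrow> (\<exists>z0 z1 z2 z3. z0 \<in> Z \<and> z1 \<in> Z \<and> z2 \<in> Z \<and> z3 \<in> Z \<and>
   p = z0 + z1 \<odot> u + z2 \<odot> v + z3 \<odot> w)"

lemma inP_add: assumes "inP p" "inP q" shows "inP (p + q)"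
proof -
  obtain a0 a1 a2 a3 where a: "a0 \<in> Z" "a1 \<in> Z" "a2 \<in> Z" "a3 \<in> Z"
    and p: "p = a0 + a1 \<odot> u + a2 \<odot> v + a3 \<odot> w" using assms(1) unfolding inP_def by blast
  obtain b0 b1 b2 b3 where b: "b0 \<in> Z" "b1 \<in> Z" "b2 \<in> Z" "b3 \<in> Z"
    and q: "q = b0 + b1 \<odot> u + b2 \<odot> v + b3 \<odot> w" using assms(2) unfolding inP_def by blast
  have "p + q = (a0 + b0) + (a1 + b1) \<odot> u + (a2 + b2) \<odot> v + (a3 + b3) \<odot> w"
    by (simp add: p q algebra_simps)
  moreover have "a0 + b0 \<in> Z" "a1 + b1 \<in> Z" "a2 + b2 \<in> Z" "a3 + b3 \<in> Z"
    using a b by (simp_all add: Zs.add)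
  ultimately show ?thesis unfolding inP_def by blast
qed

lemma inP_scale: "inP p \<Longrightarrow> inP (r *\<^sub>R p)"
  unfolding inP_def
  apply clarify
  subgoal for a0 a1 a2 a3
    by (rule exI[of _ "r *\<^sub>R a0"], rule exI[of _ "r *\<^sub>R a1"], rule exI[of _ "r *\<^sub>R a2"], rule exI[of _ "r *\<^sub>R a3"])
       (auto intro: Zs.scale simp: algebra_simps)
  done

lemma inP_neg: "inP p \<Longrightarrow> inP (- p)" using inP_scale[of p "-1"] by simp
lemma inP_diff: "inP p \<Longrightarrow> inP q \<Longrightarrow> inP (p - q)"
  using inP_add inP_neg by (metis diff_conv_add_uminus)

lemma inP_Z: "z \<in> Z \<Longrightarrow> inP z"
  unfolding inP_def using Zs.scale[OF Z_e, of 0] by (intro exI[of _ z] exI[of _ 0]) auto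
lemma inP_u: "z \<in> Z \<Longrightarrow> inP (z \<odot> u)"
  unfolding inP_def using Zs.scale[OF Z_e, of 0] by (intro exI[of _ 0] exI[of _ z] exI[of _ 0]) auto
lemma inP_v: "z \<in> Z \<Longrightarrow> inP (z \<odot> v)"
  unfolding inP_def using Zs.scale[OF Z_e, of 0] by (intro exI[of _ 0] exI[of _ 0] exI[of _ z] exI[of _ 0]) auto
lemma inP_w: "z \<in> Z \<Longrightarrow> inP (z \<odot> w)"
  unfolding inP_def using Zs.scale[OF Z_e, of 0] by (intro exI[of _ 0] exI[of _ 0] exI[of _ 0] exI[of _ z]) auto

abbreviation Bs where "Bs \<equiv> {e, u, v, w}"

lemma inP_zm: "z \<in> Z \<Longrightarrow> m \<in> Bs \<Longrightarrow> inP (z \<odot> m)"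
  using inP_Z inP_u inP_v inP_w by auto

lemma inP_lmult: assumes "a \<in> Z" "inP p" shows "inP (a \<odot> p)"
proof -
  obtain z0 z1 z2 z3 where z: "z0 \<in> Z" "z1 \<in> Z" "z2 \<in> Z" "z3 \<in> Z"
    and p: "p = z0 + z1 \<odot> u + z2 \<odot> v + z3 \<odot> w" using assms(2) unfolding inP_def by blast
  have aN: "a \<in> N" using assms(1) Z_N by auto
  have "a \<odot> p = a \<odot> z0 + (a \<odot> z1) \<odot> u + (a \<odot> z2) \<odot> v + (a \<odot> z3) \<odot> w"
    by (simp add: p ass_N[OF aN])
  moreover have "inP (a \<odot> z0 + (a \<odot> z1) \<odot> u + (a \<odot> z2) \<odot> v + (a \<odot> z3) \<odot> w)"
    using z assms(1) by (intro inP_add[OF inP_add[OF inP_add[OF inP_Z inP_u] inP_v] inP_w] Zs.mult)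
  ultimately show ?thesis by simp
qed

lemma Z_sym: "cj s = s \<Longrightarrow> s \<in> Z" by (rule Zs.sym)

lemma cjw: "cj w = v \<odot> u" by (simp add: w_def cjm su sv)

lemma Zal: "u \<odot> u \<in> Z" by (rule Z_sym) (simp add: cjm su)
lemma Zga: "v \<odot> v \<in> Z" by (rule Z_sym) (simp add: cjm sv)
lemma Zbe: "u \<odot> v + v \<odot> u \<in> Z" by (rule Z_sym) (simp add: cjm su sv add.commute)
lemma Zde: "w \<odot> cj w \<in> Z" by (rule Z_sym) (simp add: cjm)

lemma vu: "v \<odot> u = (u \<odot> v + v \<odot> u) - w" by (simp add: w_def)

lemma comm_r: "z \<in> Z \<Longrightarrow> a \<odot> z = z \<odot> a - (z \<odot> a - a \<odot> z)" by simp

lemma table: assumes "m \<in> Bs" "m' \<in> Bs" shows "inP (m \<odot> m')"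
proof -
  define al where "al = u \<odot> u"
  define be where "be = u \<odot> v + v \<odot> u"
  define ga where "ga = v \<odot> v"
  define de where "de = w \<odot> cj w"
  have Z: "al \<in> Z" "be \<in> Z" "ga \<in> Z" "de \<in> Z" using Zal Zbe Zga Zde al_def be_def ga_def de_def by auto
  have ie: "inP e" using inP_Z[OF Z_e] .
  have iu: "inP u" using inP_u[OF Z_e] by simp
  have iv: "inP v" using inP_v[OF Z_e] by simp
  have iw: "inP w" using inP_w[OF Z_e] by simp
  have uu: "inP (u \<odot> u)" using inP_Z Z al_def by auto
  have vv: "inP (v \<odot> v)" using inP_Z Z ga_def by auto
  have uv: "inP (u \<odot> v)" using iw w_def by simp
  have vu': "inP (v \<odot> u)" using vu inP_diff[OF inP_Z[OF Z(2)] iw] be_def by simp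
  have uw: "inP (u \<odot> w)"
  proof -
    have "u \<odot> w = al \<odot> v" using assoc_of[OF alt1[of u v]] by (simp add: w_def al_def)
    thus ?thesis using inP_v Z by simp
  qed
  have ugam: "u \<odot> ga = ga \<odot> u - (ga \<odot> u - u \<odot> ga)" by simp
  have iuga: "inP (u \<odot> ga)"
    by (subst ugam) (intro inP_diff inP_u inP_Z Z Z_comm)
  have vw: "inP (v \<odot> w)"
  proof -
    have "v \<odot> w = (v \<odot> u) \<odot> v" using assoc_of[OF alt2[of v u]] by (simp add: w_def)
    also have "\<dots> = be \<odot> v - (u \<odot> v) \<odot> v" by (subst vu) (simp add: be_def w_def)
    also have "(u \<odot> v) \<odot> v = u \<odot> ga" using assoc_of[OF alt3[of u v]] by (simp add: ga_def)
    finally show ?thesis using iuga inP_v Z by (auto intro: inP_diff)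
  qed
  have wv: "inP (w \<odot> v)"
  proof -
    have "w \<odot> v = u \<odot> ga" using assoc_of[OF alt3[of u v]] by (simp add: w_def ga_def)
    thus ?thesis using iuga by simp
  qed
  have wu: "inP (w \<odot> u)"
  proof -
    have "w \<odot> u = u \<odot> (v \<odot> u)" using assoc_of[OF alt2[of u v]] by (simp add: w_def)
    also have "\<dots> = u \<odot> be - u \<odot> w" by (subst vu) (simp add: be_def)
    also have "u \<odot> be = be \<odot> u - (be \<odot> u - u \<odot> be)" by simp
    finally have eq: "w \<odot> u = (be \<odot> u - (be \<odot> u - u \<odot> be)) - u \<odot> w" .
    show ?thesis by (simp only: eq) (rule inP_diff[OF inP_diff[OF inP_u[OF Z(2)] inP_Z[OF Z_comm[OF Z(2)]]] uw])
  qed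
  have ww: "inP (w \<odot> w)"
  proof -
    have "de = w \<odot> (be - w)" using vu by (simp add: de_def cjw be_def)
    hence "w \<odot> w = w \<odot> be - de" by simp
    also have "w \<odot> be = be \<odot> w - (be \<odot> w - w \<odot> be)" by simp
    finally have eq: "w \<odot> w = (be \<odot> w - (be \<odot> w - w \<odot> be)) - de" .
    show ?thesis by (simp only: eq) (rule inP_diff[OF inP_diff[OF inP_w[OF Z(2)] inP_Z[OF Z_comm[OF Z(2)]]] inP_Z[OF Z(4)]])
  qed
  show ?thesis using assms ie iu iv iw uu vv uv vu' uw vw wu wv ww by auto
qed


lemma iu: "inP u" using inP_u[OF Z_e] by simp
lemma iv: "inP v" using inP_v[OF Z_e] by simp
lemma iw: "inP w" using inP_w[OF Z_e] by simp

lemma prod_basic: assumes z: "z \<in> Z" "z' \<in> Z" and m: "m \<in> Bs" "m' \<in> Bs"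
  shows "inP ((z \<odot> m) \<odot> (z' \<odot> m'))"
proof -
  have zN: "z \<in> N" and z'N: "z' \<in> N" using z Z_N by auto
  define c where "c = z' \<odot> m - m \<odot> z'"
  have cZ: "c \<in> Z" using Z_comm[OF z(2)] c_def by simp
  have "(z \<odot> m) \<odot> (z' \<odot> m') = z \<odot> (m \<odot> (z' \<odot> m'))" by (rule ass_N[OF zN])
  also have "m \<odot> (z' \<odot> m') = (m \<odot> z') \<odot> m'" by (rule ass_N2[OF z'N, symmetric])
  also have "m \<odot> z' = z' \<odot> m - c" by (simp add: c_def)
  also have "(z' \<odot> m - c) \<odot> m' = z' \<odot> (m \<odot> m') - c \<odot> m'" by (simp add: ass_N[OF z'N])
  finally have eq: "(z \<odot> m) \<odot> (z' \<odot> m') = z \<odot> (z' \<odot> (m \<odot> m')) - z \<odot> (c \<odot> m')" by simp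
  show ?thesis unfolding eq
    by (rule inP_diff[OF inP_lmult[OF z(1) inP_lmult[OF z(2) table[OF m]]] inP_lmult[OF z(1) inP_zm[OF cZ m(2)]]])
qed

lemma P_form: "inP p \<Longrightarrow> \<exists>z0 z1 z2 z3. z0 \<in> Z \<and> z1 \<in> Z \<and> z2 \<in> Z \<and> z3 \<in> Z \<and>
   p = z0 \<odot> e + z1 \<odot> u + z2 \<odot> v + z3 \<odot> w"
  unfolding inP_def by simp

lemma mult_left: assumes "z \<in> Z" "m \<in> Bs" "inP q" shows "inP ((z \<odot> m) \<odot> q)"
proof -
  obtain b0 b1 b2 b3 where b: "b0 \<in> Z" "b1 \<in> Z" "b2 \<in> Z" "b3 \<in> Z"
    and q: "q = b0 \<odot> e + b1 \<odot> u + b2 \<odot> v + b3 \<odot> w" using P_form[OF assms(3)] by blast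
  have eq: "(z \<odot> m) \<odot> q = (z \<odot> m) \<odot> (b0 \<odot> e) + (z \<odot> m) \<odot> (b1 \<odot> u) + (z \<odot> m) \<odot> (b2 \<odot> v) + (z \<odot> m) \<odot> (b3 \<odot> w)"
    unfolding q by (simp only: m_simps)
  show ?thesis unfolding eq
    by (intro inP_add prod_basic assms(1,2) b) auto
qed

lemma multP: assumes "inP p" "inP q" shows "inP (p \<odot> q)"
proof -
  obtain a0 a1 a2 a3 where a: "a0 \<in> Z" "a1 \<in> Z" "a2 \<in> Z" "a3 \<in> Z"
    and p: "p = a0 \<odot> e + a1 \<odot> u + a2 \<odot> v + a3 \<odot> w" using P_form[OF assms(1)] by blast
  have eq: "p \<odot> q = (a0 \<odot> e) \<odot> q + (a1 \<odot> u) \<odot> q + (a2 \<odot> v) \<odot> q + (a3 \<odot> w) \<odot> q"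
    unfolding p by (simp only: m_simps)
  show ?thesis unfolding eq
    by (intro inP_add mult_left a assms(2)) auto
qed

lemma conjP: assumes "inP p" shows "inP (cj p)"
proof -
  obtain a0 a1 a2 a3 where a: "a0 \<in> Z" "a1 \<in> Z" "a2 \<in> Z" "a3 \<in> Z"
    and p: "p = a0 + a1 \<odot> u + a2 \<odot> v + a3 \<odot> w" using assms unfolding inP_def by blast
  have eq: "cj p = cj a0 + (- u) \<odot> cj a1 + (- v) \<odot> cj a2 + (v \<odot> u) \<odot> cj a3"
    unfolding p by (simp add: cjm su sv cjw)
  have vu: "inP (v \<odot> u)" using table by simp
  show ?thesis unfolding eq
    by (intro inP_add inP_Z[OF Z_cj[OF a(1)]] multP[OF inP_neg[OF iu] inP_Z[OF Z_cj[OF a(2)]]]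
        multP[OF inP_neg[OF iv] inP_Z[OF Z_cj[OF a(3)]]] multP[OF vu inP_Z[OF Z_cj[OF a(4)]]])
qed

lemma Auvw: "As u v w = 0"
proof -
  have t: "As (u \<odot> v) u v - As u (v \<odot> u) v + As u v (u \<odot> v) = u \<odot> As v u v + As u v u \<odot> v"
    by (rule teich)
  have be: "u \<odot> v + v \<odot> u \<in> N" using Zbe Z_N by auto
  have 1: "As (u \<odot> v) u v = As u v w" using cyc[of w u v] w_def by simp
  have "As u (v \<odot> u) v = As u (u \<odot> v + v \<odot> u) v - As u w v" by (subst vu) (simp only: As_lin)
  also have "\<dots> = As u v w" using N2[OF be, of u v] skew23[of u w v] by simp
  finally have 2: "As u (v \<odot> u) v = As u v w" .
  from t 1 2 show ?thesis by (simp add: w_def)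
qed

lemma perms: "As u w v = 0" "As v u w = 0" "As v w u = 0" "As w u v = 0" "As w v u = 0"
  using Auvw skew12[of u v w] skew23[of u v w] cyc[of u v w] cyc[of v w u] skew12[of w v u]
  by (simp_all add: eq_neg_iff_add_eq_0)

lemma As_basis: assumes "m \<in> Bs" "m' \<in> Bs" "m'' \<in> Bs" shows "As m m' m'' = 0"
  using assms Auvw perms N1[OF e_N] N2[OF e_N] N3[OF e_N] by auto

lemma G: assumes "inP p" "\<forall>m\<in>Bs. As m b c = 0" shows "As p b c = 0"
proof -
  obtain a0 a1 a2 a3 where a: "a0 \<in> Z" "a1 \<in> Z" "a2 \<in> Z" "a3 \<in> Z"
    and p: "p = a0 \<odot> e + a1 \<odot> u + a2 \<odot> v + a3 \<odot> w" using P_form[OF assms(1)] by blast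
  have aN: "a0 \<in> N" "a1 \<in> N" "a2 \<in> N" "a3 \<in> N" using a Z_N by auto
  show ?thesis unfolding p using assms(2)
    by (simp only: As_lin N_pull[OF aN(1)] N_pull[OF aN(2)] N_pull[OF aN(3)] N_pull[OF aN(4)]) simp
qed

lemma As_P: assumes "inP p" "inP q" "inP r" shows "As p q r = 0"
proof -
  have S1: "As p' m' m'' = 0" if "inP p'" "m' \<in> Bs" "m'' \<in> Bs" for p' m' m''
    using G[OF that(1)] As_basis that by blast
  have S2: "As p' q' m'' = 0" if "inP p'" "inP q'" "m'' \<in> Bs" for p' q' m''
  proof -
    have "\<forall>m\<in>Bs. As m p' m'' = 0" using S1[OF that(1) _ that(3)] skew12 by (metis neg_equal_0_iff_equal)
    hence "As q' p' m'' = 0" using G[OF that(2)] by blast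
    thus ?thesis using skew12[of p' q' m''] by simp
  qed
  have "\<forall>m\<in>Bs. As m p q = 0" using S2[OF assms(1,2)] cyc by metis
  hence "As r p q = 0" using G[OF assms(3)] by blast
  thus ?thesis using cyc[of p q r] cyc[of q r p] by simp
qed

end

context alt
begin

lemma part3:
  assumes "a \<in> star_subalg_gen mul e cj {x, y}" "b \<in> star_subalg_gen mul e cj {x, y}"
    "c \<in> star_subalg_gen mul e cj {x, y}"
  shows "As a b c = 0"
proof -
  interpret g: gen2 mul e cj "x - cj x" "y - cj y" "(x - cj x) \<odot> (y - cj y)"
    by unfold_locales simp_all
  have D: "g.inP d" if "d \<in> star_subalg_gen mul e cj {x, y}" for d
    using that
  proof (induction rule: star_subalg_gen.induct)
    case (gen d)
    have hx: "g.inP x"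
    proof -
      have "x = (1/2) *\<^sub>R (x + cj x) + (1/2) *\<^sub>R (x - cj x)"
        by (simp add: algebra_simps scaleR_add_left[symmetric])
      thus ?thesis by (metis g.inP_add g.inP_Z Zs.scale Z_tr g.inP_scale g.iu)
    qed
    have hy: "g.inP y"
    proof -
      have "y = (1/2) *\<^sub>R (y + cj y) + (1/2) *\<^sub>R (y - cj y)"
        by (simp add: algebra_simps scaleR_add_left[symmetric])
      thus ?thesis by (metis g.inP_add g.inP_Z Zs.scale Z_tr g.inP_scale g.iv)
    qed
    show ?case using gen hx hy by auto
  next
    case unit thus ?case using g.inP_Z[OF Z_e] .
  next
    case (add a b) thus ?case using g.inP_add by blast
  next
    case (scale a r) thus ?case using g.inP_scale by blast
  next
    case (mult a b) thus ?case using g.multP by blast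
  next
    case (conj a) thus ?case using g.conjP by blast
  qed
  show ?thesis using g.As_P D assms by blast
qed

end

theorem theorem1p10:
  fixes mul :: "'a::real_vector \<Rightarrow> 'a \<Rightarrow> 'a" and e :: 'a and cj :: "'a \<Rightarrow> 'a"
  assumes "alt_star_algebra mul e cj"
    and "compatible mul cj"
  shows "(\<forall>x. norm_of mul cj x \<in> nucleus mul)
    \<and> (\<forall>x y. associator mul x (cj x) y = 0)
    \<and> (\<forall>x y. \<forall>a\<in>star_subalg_gen mul e cj {x, y}. \<forall>b\<in>star_subalg_gen mul e cj {x, y}.
          \<forall>c\<in>star_subalg_gen mul e cj {x, y}. associator mul a b c = 0)"
proof -
  interpret alt mul e cj using assms by unfold_locales
  show ?thesis using part1 part2 part3 by blast
qed

end
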